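(* Let $n\ge 2$ be an integer such that $n+1$ is an odd prime. If $[\delta_0,\dots,\delta_n]\in\{-1,1\}^{n+1}$ satisfies $\sum_{j=0}^n\delta_j\binom{n}{j}=0$, then either $\delta_j=(-1)^j$ for all $j$ or $\delta_j=-(-1)^j$ for all $j$. Equivalently, $\hat J_n=0$.
   Context: For even $n$, $\hat J_n$ is the number of vectors $(\epsilon_0,\dots,\epsilon_{n/2-1})\in\{-1,0,1\}^{n/2}$ with $\sum_{i=0}^{n/2-1}\epsilon_i\binom{n}{i}=(-1)^{n/2+1}\frac12\binom{n}{n/2}$, excluding the alternating vector $\epsilon_i=(-1)^i$. *)

theory Defs
  imports "HOL-Computational_Algebra.Primes"
begin

end

theory Submission
  imports Defs
begin

lemma choose_cong:
  fixes n :: nat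
  assumes "prime (Suc n)" "j \<le> n"
  shows "int (Suc n) dvd (int (n choose j) - (-1) ^ j)"
  using assms(2)
proof (induction j)
  case 0 then show ?case by simp
next
  case (Suc j)
  have "Suc n dvd (Suc n choose Suc j)"
    by (rule dvd_choose_prime) (use Suc.prems assms(1) in auto)
  hence d: "int (Suc n) dvd int (n choose j) + int (n choose Suc j)"
    by (metis binomial_Suc_Suc int_dvd_int_iff of_nat_add)
  have ih: "int (Suc n) dvd (int (n choose j) - (-1) ^ j)" using Suc by simp
  have "int (n choose Suc j) - (-1) ^ Suc j
        = (int (n choose j) + int (n choose Suc j)) - (int (n choose j) - (-1) ^ j)"
    by simp
  then show ?case using d ih by (metis dvd_diff)
qed

lemma sq1: "((-1::int)^j) * ((-1)^j) = 1"
  by (simp flip: power_add)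

lemma pm1: "(-1::int)^j = 1 \<or> (-1::int)^j = -1"
  by (cases "even j") auto

theorem mainTheorem4:
  fixes n :: nat and \<delta> :: "nat \<Rightarrow> int"
  assumes "n \<ge> 2"
    and "prime (n + 1)" and "odd (n + 1)"
    and "\<forall>j\<le>n. \<delta> j \<in> {-1, 1}"
    and "(\<Sum>j=0..n. \<delta> j * int (n choose j)) = 0"
  shows "(\<forall>j\<le>n. \<delta> j = (-1) ^ j) \<or> (\<forall>j\<le>n. \<delta> j = - ((-1) ^ j))"
proof -
  define p where "p = int (n + 1)"
  define e where "e j = \<delta> j * (-1) ^ j" for j
  have pr: "prime (Suc n)" using assms(2) by simp
  have e1: "e j \<in> {-1, 1}" if "j \<le> n" for j
    using assms(4) that pm1[of j] by (auto simp: e_def)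
  have "p dvd (\<Sum>j=0..n. \<delta> j * int (n choose j)) - (\<Sum>j=0..n. e j)"
    unfolding sum_subtractf[symmetric]
  proof (rule dvd_sum)
    fix j assume "j \<in> {0..n}"
    hence "p dvd (int (n choose j) - (-1) ^ j)" using choose_cong[OF pr] by (simp add: p_def)
    hence "p dvd \<delta> j * (int (n choose j) - (-1) ^ j)" by simp
    thus "p dvd \<delta> j * int (n choose j) - e j" by (simp add: e_def algebra_simps)
  qed
  hence dS: "p dvd (\<Sum>j=0..n. e j)" using assms(5) by simp
  define T where "T = (\<Sum>j=0..n. e j + 1)"
  have T: "T = (\<Sum>j=0..n. e j) + p" by (simp add: T_def sum.distrib p_def)
  have dT: "p dvd T" using dS T by simp
  have ev: "2 dvd T" unfolding T_def
    by (rule dvd_sum) (use e1 in fastforce)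
  have T0: "0 \<le> T" unfolding T_def by (rule sum_nonneg) (use e1 in fastforce)
  have T2: "T \<le> 2 * p"
  proof -
    have "T \<le> (\<Sum>j=0..n. 2)" unfolding T_def by (rule sum_mono) (use e1 in fastforce)
    thus ?thesis by (simp add: p_def)
  qed
  obtain k where k: "T = p * k" using dT by blast
  have pp: "p > 1" using assms(1) by (simp add: p_def)
  have "k \<ge> 0" using T0 k pp by (simp add: zero_le_mult_iff)
  moreover have "k \<le> 2" proof -
    have "p * k \<le> p * 2" using T2 k by (simp add: mult.commute)
    thus ?thesis using pp mult_le_cancel_left_pos[of p k 2] by simp
  qed
  moreover have "k \<noteq> 1"
  proof
    assume "k = 1"
    hence "2 dvd p" using ev k by simp
    thus False using assms(3) by (simp add: p_def)
  qed
  ultimately have "k = 0 \<or> k = 2" by auto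
  thus ?thesis
  proof
    assume "k = 0"
    hence "T = 0" using k by simp
    hence "\<forall>j\<in>{0..n}. e j + 1 = 0" unfolding T_def
      by (subst sum_nonneg_eq_0_iff[symmetric]) (use e1 in fastforce)+
    hence "\<forall>j\<le>n. e j = -1" proof (intro allI impI)
      fix j assume "j \<le> n" hence "e j + 1 = 0" using \<open>\<forall>j\<in>{0..n}. e j + 1 = 0\<close> by simp
      thus "e j = -1" by linarith
    qed
    hence "\<forall>j\<le>n. \<delta> j = - ((-1) ^ j)"
    proof (intro allI impI)
      fix j assume "j \<le> n"
      hence "\<delta> j * (-1)^j * (-1)^j = - ((-1)^j)" using \<open>\<forall>j\<le>n. e j = -1\<close> by (simp add: e_def)
      thus "\<delta> j = - ((-1)^j)" using sq1[of j] by (simp add: mult.assoc)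
    qed
    thus ?thesis by simp
  next
    assume "k = 2"
    hence "T = 2 * p" using k by simp
    hence "(\<Sum>j=0..n. 1 - e j) = 0"
      by (simp add: T_def sum_subtractf p_def sum.distrib)
    hence "\<forall>j\<in>{0..n}. 1 - e j = 0"
      by (subst sum_nonneg_eq_0_iff[symmetric]) (use e1 in fastforce)+
    hence "\<forall>j\<le>n. e j = 1" proof (intro allI impI)
      fix j assume "j \<le> n" hence "1 - e j = 0" using \<open>\<forall>j\<in>{0..n}. 1 - e j = 0\<close> by simp
      thus "e j = 1" by linarith
    qed
    hence "\<forall>j\<le>n. \<delta> j = (-1) ^ j"
    proof (intro allI impI)
      fix j assume "j \<le> n"
      hence "\<delta> j * (-1)^j * (-1)^j = (-1)^j" using \<open>\<forall>j\<le>n. e j = 1\<close> by (simp add: e_def)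
      thus "\<delta> j = (-1)^j" using sq1[of j] by (simp add: mult.assoc)
    qed
    thus ?thesis by simp
  qed
qed

end
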